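(* Let $E$ be an $S$-scaled vector space and $u$ a $1$-bounded $\tau$-morphism $E\to E$. If $3N_s^1(u)<s$ for every $s\le\tau$, then the series $e^u:=\sum_{j\ge0}u^j/j!$ converges to a morphism of $E$, and more precisely $$|e^u x|_{\lambda s}\le\sum_{j\ge0}\frac{(3N_s^1(u))^j}{(1-\lambda)^j s^j}|x|_s=\frac{1}{1-\frac{3N_s^1(u)}{(1-\lambda)s}}|x|_s$$ for all $s\in]0,\tau]$, all $\lambda\in]0,1-\frac{3N_s^1(u)}{s}[$ and all $x\in E_s$.
   Context: An $S$-scale of Banach spaces is a decreasing family $(E_s)_{s\in]0,S[}$ of Banach spaces with norms $|\cdot|_s$, the inclusions $E_{s+\sigma}\subset E_s$ having norm at most $1$; an $S$-scaled vector space is $E=\bigcup_sE_s$ with the direct-limit topology. A morphism $E\to E$ is a linear map such that for each $s$ there is $s'$ with $E_s$ mapped continuously into $E_{s'}$. A linear map $u$ is a $\tau$-morphism if for all $s'\in]0,\tau]$, $s\in]0,s'[$, $u(E_{s'})\subset E_s$ continuously; it is $1$-bounded if there is $C$ with $|u(x)|_s\le C\sigma^{-1}|x|_{s+\sigma}$ for all $s\in]0,\tau[$, $\sigma\in]0,\tau-s]$, $x\in E_{s+\sigma}$, and $N_\tau^1(u)$ is the smallest such $C$. For $s\le\tau$, $N_s^1(u)$ is the same constant with $\tau$ replaced by $s$. *)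

theory Defs
  imports "HOL-Analysis.Analysis"
begin

text \<open>An S-scale of Banach spaces, modelled inside an ambient real vector space 'a:
  E s is the carrier of the s-th space, nrm s its norm.\<close>

definition banach_on :: "'a::real_vector set \<Rightarrow> ('a \<Rightarrow> real) \<Rightarrow> bool" where
  "banach_on X n \<longleftrightarrow>
     0 \<in> X \<and> (\<forall>x\<in>X. \<forall>y\<in>X. x + y \<in> X) \<and> (\<forall>c. \<forall>x\<in>X. c *\<^sub>R x \<in> X) \<and>
     (\<forall>x\<in>X. n x \<ge> 0 \<and> (n x = 0 \<longleftrightarrow> x = 0)) \<and>
     (\<forall>x\<in>X. \<forall>y\<in>X. n (x + y) \<le> n x + n y) \<and>
     (\<forall>c. \<forall>x\<in>X. n (c *\<^sub>R x) = \<bar>c\<bar> * n x) \<and>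
     (\<forall>f::nat \<Rightarrow> 'a. (\<forall>k. f k \<in> X) \<longrightarrow>
        (\<forall>e>0. \<exists>M. \<forall>k\<ge>M. \<forall>l\<ge>M. n (f k - f l) < e) \<longrightarrow>
        (\<exists>y\<in>X. (\<lambda>k. n (f k - y)) \<longlonglongrightarrow> 0))"

definition S_scale :: "real \<Rightarrow> (real \<Rightarrow> 'a::real_vector set) \<Rightarrow> (real \<Rightarrow> 'a \<Rightarrow> real) \<Rightarrow> bool" where
  "S_scale S E nrm \<longleftrightarrow> S > 0 \<and>
     (\<forall>s. 0 < s \<and> s < S \<longrightarrow> banach_on (E s) (nrm s)) \<and>
     (\<forall>s \<sigma>. 0 < s \<and> 0 < \<sigma> \<and> s + \<sigma> < S \<longrightarrow>
        E (s + \<sigma>) \<subseteq> E s \<and> (\<forall>x\<in>E (s + \<sigma>). nrm s x \<le> nrm (s + \<sigma>) x))"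

definition scaled_space :: "real \<Rightarrow> (real \<Rightarrow> 'a set) \<Rightarrow> 'a set" where
  "scaled_space S E = (\<Union>s\<in>{0<..<S}. E s)"

definition linear_on_space :: "real \<Rightarrow> (real \<Rightarrow> 'a::real_vector set) \<Rightarrow> ('a \<Rightarrow> 'a) \<Rightarrow> bool" where
  "linear_on_space S E u \<longleftrightarrow>
     u ` scaled_space S E \<subseteq> scaled_space S E \<and>
     (\<forall>x\<in>scaled_space S E. \<forall>y\<in>scaled_space S E. u (x + y) = u x + u y) \<and>
     (\<forall>c. \<forall>x\<in>scaled_space S E. u (c *\<^sub>R x) = c *\<^sub>R u x)"

definition maps_cont :: "(real \<Rightarrow> 'a::real_vector set) \<Rightarrow> (real \<Rightarrow> 'a \<Rightarrow> real) \<Rightarrow> ('a \<Rightarrow> 'a) \<Rightarrow> real \<Rightarrow> real \<Rightarrow> bool" where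
  "maps_cont E nrm u s' s \<longleftrightarrow>
     (\<forall>x\<in>E s'. u x \<in> E s) \<and> (\<exists>C. \<forall>x\<in>E s'. nrm s (u x) \<le> C * nrm s' x)"

definition morphism :: "real \<Rightarrow> (real \<Rightarrow> 'a::real_vector set) \<Rightarrow> (real \<Rightarrow> 'a \<Rightarrow> real) \<Rightarrow> ('a \<Rightarrow> 'a) \<Rightarrow> bool" where
  "morphism S E nrm u \<longleftrightarrow> linear_on_space S E u \<and>
     (\<forall>s. 0 < s \<and> s < S \<longrightarrow> (\<exists>s'. 0 < s' \<and> s' < S \<and> maps_cont E nrm u s s'))"

definition tau_morphism :: "real \<Rightarrow> (real \<Rightarrow> 'a::real_vector set) \<Rightarrow> (real \<Rightarrow> 'a \<Rightarrow> real) \<Rightarrow> real \<Rightarrow> ('a \<Rightarrow> 'a) \<Rightarrow> bool" where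
  "tau_morphism S E nrm \<tau> u \<longleftrightarrow> linear_on_space S E u \<and>
     (\<forall>s' s. 0 < s' \<and> s' \<le> \<tau> \<and> 0 < s \<and> s < s' \<longrightarrow> maps_cont E nrm u s' s)"

definition one_bound_consts :: "(real \<Rightarrow> 'a::real_vector set) \<Rightarrow> (real \<Rightarrow> 'a \<Rightarrow> real) \<Rightarrow> real \<Rightarrow> ('a::real_vector \<Rightarrow> 'a) \<Rightarrow> real set" where
  "one_bound_consts E nrm t u = {C. C \<ge> 0 \<and>
     (\<forall>s \<sigma>. 0 < s \<and> s < t \<and> 0 < \<sigma> \<and> \<sigma> \<le> t - s \<longrightarrow>
        (\<forall>x\<in>E (s + \<sigma>). nrm s (u x) \<le> C / \<sigma> * nrm (s + \<sigma>) x))}"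

definition one_bounded :: "(real \<Rightarrow> 'a::real_vector set) \<Rightarrow> (real \<Rightarrow> 'a \<Rightarrow> real) \<Rightarrow> real \<Rightarrow> ('a::real_vector \<Rightarrow> 'a) \<Rightarrow> bool" where
  "one_bounded E nrm t u \<longleftrightarrow> one_bound_consts E nrm t u \<noteq> {}"

definition N1 :: "(real \<Rightarrow> 'a::real_vector set) \<Rightarrow> (real \<Rightarrow> 'a \<Rightarrow> real) \<Rightarrow> real \<Rightarrow> ('a::real_vector \<Rightarrow> 'a) \<Rightarrow> real" where
  "N1 E nrm t u = Inf (one_bound_consts E nrm t u)"

end

theory Submission
  imports Defs
begin

lemma jj_fact: "real j ^ j / fact j \<le> 3 ^ j"
proof -
  have s: "(\<lambda>n. real j ^ n /\<^sub>R fact n) sums exp (real j)" by (rule exp_converges)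
  have "real j ^ j / fact j = sum (\<lambda>n. real j ^ n /\<^sub>R fact n) {j}"
    by (simp add: divide_inverse mult.commute)
  also have "\<dots> \<le> exp (real j)"
    using sum_le_suminf[OF sums_summable[OF s], of "{j}"] sums_unique[OF s] by simp
  also have "exp (real j) = exp 1 ^ j" using exp_of_nat_mult[of j 1] by simp
  also have "\<dots> \<le> 3^j" by (rule power_mono[OF exp_le]) simp
  finally show ?thesis .
qed

locale sc =
  fixes S \<tau> :: real and E :: "real \<Rightarrow> 'a::real_vector set" and nrm :: "real \<Rightarrow> 'a \<Rightarrow> real"
    and u :: "'a \<Rightarrow> 'a"
  assumes scale: "S_scale S E nrm"
    and tau: "0 < \<tau>" "\<tau> < S"
    and taumor: "tau_morphism S E nrm \<tau> u"
    and bdd: "one_bounded E nrm \<tau> u"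
begin

lemma bo: "0 < a \<Longrightarrow> a < S \<Longrightarrow> banach_on (E a) (nrm a)"
  using scale unfolding S_scale_def by blast

lemma lv:
  assumes "0 < a" "a < S"
  shows "0 \<in> E a"
    and "x \<in> E a \<Longrightarrow> y \<in> E a \<Longrightarrow> x + y \<in> E a"
    and "x \<in> E a \<Longrightarrow> c *\<^sub>R x \<in> E a"
    and "x \<in> E a \<Longrightarrow> y \<in> E a \<Longrightarrow> x - y \<in> E a"
    and "x \<in> E a \<Longrightarrow> 0 \<le> nrm a x"
    and "x \<in> E a \<Longrightarrow> nrm a x = 0 \<longleftrightarrow> x = 0"
    and "x \<in> E a \<Longrightarrow> y \<in> E a \<Longrightarrow> nrm a (x + y) \<le> nrm a x + nrm a y"
    and "x \<in> E a \<Longrightarrow> nrm a (c *\<^sub>R x) = \<bar>c\<bar> * nrm a x"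
    and "x \<in> E a \<Longrightarrow> y \<in> E a \<Longrightarrow> nrm a (x - y) = nrm a (y - x)"
    and "nrm a 0 = 0"
proof -
  have B: "banach_on (E a) (nrm a)" using bo assms by blast
  have D0: "0 \<in> E a" using B unfolding banach_on_def by (elim conjE)
  have D1: "\<forall>x\<in>E a. \<forall>y\<in>E a. x + y \<in> E a" using B unfolding banach_on_def by (elim conjE)
  have D2: "\<forall>c. \<forall>x\<in>E a. c *\<^sub>R x \<in> E a" using B unfolding banach_on_def by (elim conjE)
  have D3: "\<forall>x\<in>E a. nrm a x \<ge> 0 \<and> (nrm a x = 0 \<longleftrightarrow> x = 0)" using B unfolding banach_on_def by (elim conjE)
  have D4: "\<forall>x\<in>E a. \<forall>y\<in>E a. nrm a (x + y) \<le> nrm a x + nrm a y" using B unfolding banach_on_def by (elim conjE)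
  have D5: "\<forall>c. \<forall>x\<in>E a. nrm a (c *\<^sub>R x) = \<bar>c\<bar> * nrm a x" using B unfolding banach_on_def by (elim conjE)
  note D = D0 D1 D2 D3 D4 D5
  show "0 \<in> E a" using D by simp
  show "x \<in> E a \<Longrightarrow> y \<in> E a \<Longrightarrow> x + y \<in> E a" using D by simp
  show sc: "\<And>c x. x \<in> E a \<Longrightarrow> c *\<^sub>R x \<in> E a" using D by simp
  show "x \<in> E a \<Longrightarrow> y \<in> E a \<Longrightarrow> x - y \<in> E a"
  proof -
    assume xy: "x \<in> E a" "y \<in> E a"
    have "(-1) *\<^sub>R y \<in> E a" using D2 xy by blast
    then have "x + (-1) *\<^sub>R y \<in> E a" using D1 xy by blast
    moreover have "x + (-1) *\<^sub>R y = x - y" by simp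
    ultimately show ?thesis by simp
  qed
  show "x \<in> E a \<Longrightarrow> 0 \<le> nrm a x" using D by simp
  show "x \<in> E a \<Longrightarrow> nrm a x = 0 \<longleftrightarrow> x = 0" using D by simp
  show "x \<in> E a \<Longrightarrow> y \<in> E a \<Longrightarrow> nrm a (x + y) \<le> nrm a x + nrm a y" using D by simp
  show hm: "\<And>c x. x \<in> E a \<Longrightarrow> nrm a (c *\<^sub>R x) = \<bar>c\<bar> * nrm a x" using D by simp
  show "x \<in> E a \<Longrightarrow> y \<in> E a \<Longrightarrow> nrm a (x - y) = nrm a (y - x)"
  proof -
    assume xy: "x \<in> E a" "y \<in> E a"
    have "y - x \<in> E a" using xy D by (metis add_uminus_conv_diff scaleR_minus1_left)
    then have "nrm a ((-1) *\<^sub>R (y - x)) = nrm a (y - x)" using hm[of "y - x" "-1"] by simp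
    then show ?thesis by simp
  qed
  show "nrm a 0 = 0" using D by simp
qed

lemma sub:
  assumes "0 < a" "a \<le> b" "b < S"
  shows "E b \<subseteq> E a" "x \<in> E b \<Longrightarrow> nrm a x \<le> nrm b x"
proof -
  have "E b \<subseteq> E a \<and> (\<forall>x\<in>E b. nrm a x \<le> nrm b x)"
  proof (cases "a = b")
    case True then show ?thesis by simp
  next
    case False
    then have "0 < b - a" using assms by simp
    then have "E (a + (b - a)) \<subseteq> E a \<and> (\<forall>x\<in>E (a + (b - a)). nrm a x \<le> nrm (a + (b - a)) x)"
    proof -
      have "\<forall>s \<sigma>. 0 < s \<and> 0 < \<sigma> \<and> s + \<sigma> < S \<longrightarrow>
        E (s + \<sigma>) \<subseteq> E s \<and> (\<forall>x\<in>E (s + \<sigma>). nrm s x \<le> nrm (s + \<sigma>) x)"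
        using scale unfolding S_scale_def by blast
      from this[rule_format, of a "b - a"] show ?thesis using assms \<open>0 < b - a\<close> by simp
    qed
    then show ?thesis by simp
  qed
  then show "E b \<subseteq> E a" "x \<in> E b \<Longrightarrow> nrm a x \<le> nrm b x" by auto
qed

end
context sc begin

lemma N1_adm:
  assumes t: "0 < t" "t \<le> \<tau>"
  shows "0 \<le> N1 E nrm t u"
    and "\<And>s \<sigma> x. 0 < s \<Longrightarrow> s < t \<Longrightarrow> 0 < \<sigma> \<Longrightarrow> \<sigma> \<le> t - s \<Longrightarrow> x \<in> E (s + \<sigma>) \<Longrightarrow>
       nrm s (u x) \<le> N1 E nrm t u / \<sigma> * nrm (s + \<sigma>) x"
proof -
  define B where "B = one_bound_consts E nrm t u"
  obtain C0 where C0: "C0 \<in> one_bound_consts E nrm \<tau> u" using bdd unfolding one_bounded_def by blast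
  have C0B: "C0 \<in> B" using C0 t unfolding B_def one_bound_consts_def by auto
  have bb: "bdd_below B" unfolding B_def one_bound_consts_def bdd_below_def by auto
  have Bne: "B \<noteq> {}" using C0B by blast
  show N0: "0 \<le> N1 E nrm t u"
    unfolding N1_def B_def[symmetric] by (rule cInf_greatest[OF Bne]) (auto simp: B_def one_bound_consts_def)
  fix s \<sigma> x assume h: "0 < s" "s < t" "0 < \<sigma>" "\<sigma> \<le> t - s" "x \<in> E (s + \<sigma>)"
  have adm: "\<And>C. C \<in> B \<Longrightarrow> nrm s (u x) \<le> C / \<sigma> * nrm (s + \<sigma>) x"
    using h unfolding B_def one_bound_consts_def by blast
  have "0 \<le> nrm (s + \<sigma>) x" using lv(5)[of "s + \<sigma>" x] h t tau by auto
  show "nrm s (u x) \<le> N1 E nrm t u / \<sigma> * nrm (s + \<sigma>) x"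
  proof (cases "nrm (s + \<sigma>) x = 0")
    case True
    then show ?thesis using adm[OF C0B] by simp
  next
    case False
    then have pos: "0 < nrm (s + \<sigma>) x" using \<open>0 \<le> nrm (s + \<sigma>) x\<close> by simp
    have "\<forall>C\<in>B. nrm s (u x) * \<sigma> / nrm (s + \<sigma>) x \<le> C"
    proof
      fix C assume "C \<in> B"
      then have "nrm s (u x) \<le> C / \<sigma> * nrm (s + \<sigma>) x" by (rule adm)
      then have "nrm s (u x) * \<sigma> \<le> C * nrm (s + \<sigma>) x" using h(3) by (simp add: field_simps)
      then show "nrm s (u x) * \<sigma> / nrm (s + \<sigma>) x \<le> C" using pos by (simp add: field_simps)
    qed
    then have "nrm s (u x) * \<sigma> / nrm (s + \<sigma>) x \<le> Inf B" using Bne by (intro cInf_greatest) auto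
    then have "nrm s (u x) * \<sigma> \<le> N1 E nrm t u * nrm (s + \<sigma>) x"
      using pos unfolding N1_def B_def by (simp add: field_simps)
    then show ?thesis using h(3) by (simp add: field_simps)
  qed
qed

lemma iter:
  assumes "0 < b" "0 < \<sigma>" "b + real j * \<sigma> \<le> t" "t \<le> \<tau>" "x \<in> E (b + real j * \<sigma>)"
  shows "(u ^^ j) x \<in> E b \<and> nrm b ((u ^^ j) x) \<le> (N1 E nrm t u / \<sigma>) ^ j * nrm (b + real j * \<sigma>) x"
  using assms
proof (induction j arbitrary: b)
  case 0
  then show ?case by simp
next
  case (Suc j)
  have eq: "b + \<sigma> + real j * \<sigma> = b + real (Suc j) * \<sigma>" by (simp add: algebra_simps)
  have IH: "(u ^^ j) x \<in> E (b + \<sigma>) \<and> nrm (b + \<sigma>) ((u ^^ j) x) \<le> (N1 E nrm t u / \<sigma>) ^ j * nrm (b + real (Suc j) * \<sigma>) x"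
    using Suc.IH[of "b + \<sigma>"] Suc.prems unfolding eq by simp
  have le1: "b + \<sigma> \<le> t" using Suc.prems by (simp add: algebra_simps) (smt (verit) mult_nonneg_nonneg of_nat_0_le_iff)
  have "maps_cont E nrm u (b + \<sigma>) b" using taumor Suc.prems le1 unfolding tau_morphism_def by auto
  then have mem: "(u ^^ Suc j) x \<in> E b" using IH unfolding maps_cont_def by simp
  have t0: "0 < t" using le1 Suc.prems by simp
  have N0: "0 \<le> N1 E nrm t u" using N1_adm(1)[OF t0 Suc.prems(4)] .
  have "nrm b ((u ^^ Suc j) x) = nrm b (u ((u ^^ j) x))" by simp
  also have "\<dots> \<le> N1 E nrm t u / \<sigma> * nrm (b + \<sigma>) ((u ^^ j) x)"
    using N1_adm(2)[OF t0 Suc.prems(4), of b \<sigma> "(u ^^ j) x"] IH le1 Suc.prems by simp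
  also have "\<dots> \<le> N1 E nrm t u / \<sigma> * ((N1 E nrm t u / \<sigma>) ^ j * nrm (b + real (Suc j) * \<sigma>) x)"
    using IH N0 Suc.prems by (intro mult_left_mono) auto
  also have "\<dots> = (N1 E nrm t u / \<sigma>) ^ Suc j * nrm (b + real (Suc j) * \<sigma>) x" by simp
  finally show ?case using mem by simp
qed

end
context sc begin

lemma est:
  assumes s: "0 < s" "s \<le> \<tau>" and lam: "0 < lam" "lam < 1 - 3 * N1 E nrm s u / s" and x: "x \<in> E s"
  shows "(u ^^ j) x \<in> E (lam * s) \<and>
    nrm (lam * s) ((u ^^ j) x /\<^sub>R fact j) \<le> (3 * N1 E nrm s u) ^ j / ((1 - lam) ^ j * s ^ j) * nrm s x"
proof -
  define N where "N = N1 E nrm s u"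
  have N0: "0 \<le> N" unfolding N_def using N1_adm(1)[OF s] .
  have l1: "lam < 1" using lam N0 s unfolding N_def[symmetric] by (smt (verit) divide_nonneg_pos)
  have gap: "3 * N < (1 - lam) * s" using lam s unfolding N_def[symmetric] by (simp add: field_simps)
  have ls: "lam * s < s" using l1 s by simp
  have ls0: "0 < lam * s" using lam s by simp
  have sS: "s < S" using s tau by simp
  have c0: "0 \<le> nrm s x" using lv(5)[OF s(1) sS x] .
  show ?thesis
  proof (cases "j = 0")
    case True
    have "x \<in> E (lam * s)" using sub(1)[OF ls0 _ sS] ls x by auto
    moreover have "nrm (lam * s) x \<le> nrm s x" using sub(2)[OF ls0 _ sS] ls x by auto
    ultimately show ?thesis using True by simp
  next
    case False
    define \<sigma> where "\<sigma> = (1 - lam) * s / real j"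
    have sig0: "0 < \<sigma>" unfolding \<sigma>_def using False l1 s by simp
    have bs: "lam * s + real j * \<sigma> = s" unfolding \<sigma>_def using False by (simp, simp add: algebra_simps)
    have I: "(u ^^ j) x \<in> E (lam * s) \<and> nrm (lam * s) ((u ^^ j) x) \<le> (N / \<sigma>) ^ j * nrm s x"
      using iter[OF ls0 sig0, of j s x] bs s x unfolding N_def by simp
    define A where "A = N / ((1 - lam) * s)"
    have A0: "0 \<le> A" unfolding A_def using N0 l1 s by simp
    have NA: "N / \<sigma> = A * real j" unfolding A_def \<sigma>_def using False l1 s by (simp add: field_simps)
    have "nrm (lam * s) ((u ^^ j) x /\<^sub>R fact j) = nrm (lam * s) ((u ^^ j) x) / fact j"
      using lv(8)[OF ls0 _, of "(u ^^ j) x" "inverse (fact j)"] I sS ls by (simp add: divide_inverse mult.commute)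
    also have "\<dots> \<le> (N / \<sigma>) ^ j * nrm s x / fact j"
      using I by (simp add: divide_right_mono)
    also have "\<dots> = A ^ j * (real j ^ j / fact j) * nrm s x" unfolding NA by (simp add: power_mult_distrib)
    also have "\<dots> \<le> A ^ j * 3 ^ j * nrm s x"
      using jj_fact[of j] A0 c0 by (intro mult_right_mono mult_left_mono) auto
    also have "\<dots> = (3 * N) ^ j / ((1 - lam) ^ j * s ^ j) * nrm s x"
      unfolding A_def by (simp add: power_divide power_mult_distrib)
    finally show ?thesis using I unfolding N_def by simp
  qed
qed

end
context sc begin

definition psum :: "'a \<Rightarrow> nat \<Rightarrow> 'a" where
  "psum x n = (\<Sum>j<n. (u ^^ j) x /\<^sub>R fact j)"

definition conv :: "'a \<Rightarrow> 'a \<Rightarrow> real \<Rightarrow> bool" where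
  "conv x y a \<longleftrightarrow> 0 < a \<and> a < S \<and> y \<in> E a \<and> (\<forall>n. psum x n \<in> E a) \<and>
     (\<lambda>n. nrm a (psum x n - y)) \<longlonglongrightarrow> 0"

definition F :: "'a \<Rightarrow> 'a" where
  "F x = (SOME y. \<exists>a. conv x y a)"

lemma unique_level:
  assumes a: "0 < a" "a < S" and p: "\<And>n. p n \<in> E a" and y: "y \<in> E a" "y' \<in> E a"
    and l: "(\<lambda>n. nrm a (p n - y)) \<longlonglongrightarrow> 0" "(\<lambda>n. nrm a (p n - y')) \<longlonglongrightarrow> 0"
  shows "y = y'"
proof -
  have le: "nrm a (y - y') \<le> nrm a (p n - y) + nrm a (p n - y')" for n
  proof -
    have "y - y' = (y - p n) + (p n - y')" by simp
    then have "nrm a (y - y') \<le> nrm a (y - p n) + nrm a (p n - y')"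
      using lv(7)[OF a, of "y - p n" "p n - y'"] lv(4)[OF a] p y by metis
    also have "nrm a (y - p n) = nrm a (p n - y)" using lv(9)[OF a] p y by metis
    finally show ?thesis .
  qed
  have "(\<lambda>n. nrm a (p n - y) + nrm a (p n - y')) \<longlonglongrightarrow> 0 + 0" by (intro tendsto_add l)
  then have "nrm a (y - y') \<le> 0" using le by (intro LIMSEQ_le_const[of _ 0]) auto
  moreover have "0 \<le> nrm a (y - y')" using lv(5)[OF a] lv(4)[OF a] y by metis
  ultimately have "nrm a (y - y') = 0" by simp
  then have "y - y' = 0" using lv(6)[OF a] lv(4)[OF a] y by metis
  then show ?thesis by simp
qed

lemma conv_unique_le:
  assumes "conv x y a" "conv x y' b" "a \<le> b"
  shows "y = y'"
proof -
  have a: "0 < a" "a < S" and b: "0 < b" "b < S" using assms unfolding conv_def by auto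
  have sb: "E b \<subseteq> E a" using sub(1)[OF a(1) assms(3) b(2)] .
  have p: "\<And>n. psum x n \<in> E a" and y: "y \<in> E a" and la: "(\<lambda>n. nrm a (psum x n - y)) \<longlonglongrightarrow> 0"
    using assms(1) unfolding conv_def by auto
  have pb: "\<And>n. psum x n \<in> E b" and yb: "y' \<in> E b" and lb: "(\<lambda>n. nrm b (psum x n - y')) \<longlonglongrightarrow> 0"
    using assms(2) unfolding conv_def by auto
  have y': "y' \<in> E a" using sb yb by blast
  have "(\<lambda>n. nrm a (psum x n - y')) \<longlonglongrightarrow> 0"
  proof (rule tendsto_sandwich[of "\<lambda>n. 0" _ _ "\<lambda>n. nrm b (psum x n - y')"])
    show "\<forall>\<^sub>F n in sequentially. 0 \<le> nrm a (psum x n - y')"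
      using lv(5)[OF a] lv(4)[OF a] p y' by (auto intro: always_eventually)
    show "\<forall>\<^sub>F n in sequentially. nrm a (psum x n - y') \<le> nrm b (psum x n - y')"
      using sub(2)[OF a(1) assms(3) b(2)] lv(4)[OF b] pb yb by (auto intro: always_eventually)
  qed (use lb in auto)
  then show ?thesis using unique_level[OF a p y y' la] by simp
qed

lemma conv_unique: "conv x y a \<Longrightarrow> conv x y' b \<Longrightarrow> y = y'"
  by (metis conv_unique_le linear)

lemma F_eq: "conv x y a \<Longrightarrow> F x = y"
proof -
  assume c: "conv x y a"
  then have "\<exists>y a. conv x y a" by blast
  then have "\<exists>a. conv x (F x) a" unfolding F_def by (rule someI_ex)
  then show ?thesis using c conv_unique by blast
qed

end
context sc begin

lemma main:
  assumes s: "0 < s" "s \<le> \<tau>" and lam: "0 < lam" "lam < 1 - 3 * N1 E nrm s u / s" and x: "x \<in> E s"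
  shows "(\<forall>j. (u ^^ j) x \<in> E (lam * s)) \<and> F x \<in> E (lam * s) \<and>
        (\<lambda>n. nrm (lam * s) ((\<Sum>j<n. (u ^^ j) x /\<^sub>R fact j) - F x)) \<longlonglongrightarrow> 0 \<and>
        summable (\<lambda>j. (3 * N1 E nrm s u) ^ j / ((1 - lam) ^ j * s ^ j) * nrm s x) \<and>
        nrm (lam * s) (F x) \<le> (\<Sum>j. (3 * N1 E nrm s u) ^ j / ((1 - lam) ^ j * s ^ j) * nrm s x) \<and>
        (\<Sum>j. (3 * N1 E nrm s u) ^ j / ((1 - lam) ^ j * s ^ j) * nrm s x)
          = 1 / (1 - 3 * N1 E nrm s u / ((1 - lam) * s)) * nrm s x \<and>
        conv x (F x) (lam * s)"
proof -
  define N where "N = N1 E nrm s u"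
  define a where "a = lam * s"
  define c where "c = nrm s x"
  define q where "q = 3 * N / ((1 - lam) * s)"
  define T where "T = (\<lambda>j. (3 * N) ^ j / ((1 - lam) ^ j * s ^ j) * c)"
  define v where "v = (\<lambda>j. (u ^^ j) x /\<^sub>R fact j)"
  have N0: "0 \<le> N" unfolding N_def using N1_adm(1)[OF s] .
  have l1: "lam < 1" using lam N0 s unfolding N_def[symmetric] by (smt (verit) divide_nonneg_pos)
  have gap: "3 * N < (1 - lam) * s" using lam s unfolding N_def[symmetric] by (simp add: field_simps)
  have a0: "0 < a" unfolding a_def using lam s by simp
  have sS: "s < S" using s tau by simp
  have aS: "a < S" unfolding a_def using l1 s sS
    by (smt (verit, best) mult_less_cancel_right2)
  have c0: "0 \<le> c" unfolding c_def using lv(5)[OF s(1) sS x] .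
  have q0: "0 \<le> q" unfolding q_def using N0 l1 s by simp
  have q1: "q < 1" unfolding q_def using gap l1 s by simp
  have Tq: "T j = q ^ j * c" for j unfolding T_def q_def by (simp add: power_divide power_mult_distrib)
  have T0: "0 \<le> T j" for j unfolding Tq using q0 c0 by simp
  have E1: "(u ^^ j) x \<in> E a" and E2: "nrm a (v j) \<le> T j" for j
    using est[OF s lam x, of j] unfolding a_def v_def T_def N_def c_def by auto
  have vE: "v j \<in> E a" for j unfolding v_def using lv(3)[OF a0 aS E1] .
  have sumT: "T sums (c / (1 - q))"
  proof -
    have "(\<lambda>j. q ^ j) sums (1 / (1 - q))" using geometric_sums[of q] q0 q1 by simp
    from sums_mult2[OF this, of c] show ?thesis unfolding Tq by simp
  qed
  have smT: "summable T" using sumT by (rule sums_summable)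
  have pE: "psum x n \<in> E a" for n
  proof (induction n)
    case 0 show ?case by (simp add: psum_def lv(1)[OF a0 aS])
  next
    case (Suc n)
    have "psum x (Suc n) = psum x n + v n" by (simp add: psum_def v_def)
    then show ?case using lv(2)[OF a0 aS Suc vE] by simp
  qed
  have pbound: "nrm a (psum x n) \<le> sum T {..<n}" for n
  proof (induction n)
    case 0 show ?case by (simp add: psum_def lv(10)[OF a0 aS])
  next
    case (Suc n)
    have "psum x (Suc n) = psum x n + v n" by (simp add: psum_def v_def)
    then have "nrm a (psum x (Suc n)) \<le> nrm a (psum x n) + nrm a (v n)"
      using lv(7)[OF a0 aS pE vE] by simp
    then show ?case using Suc E2[of n] by simp
  qed
  have dbound: "nrm a (psum x k - psum x l) \<le> sum T {..<k} - sum T {..<l}" if "l \<le> k" for k l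
    using that
  proof (induction k rule: dec_induct)
    case base show ?case by (simp add: lv(10)[OF a0 aS])
  next
    case (step k)
    have "psum x (Suc k) - psum x l = (psum x k - psum x l) + v k" by (simp add: psum_def v_def)
    then have "nrm a (psum x (Suc k) - psum x l) \<le> nrm a (psum x k - psum x l) + nrm a (v k)"
      using lv(7)[OF a0 aS lv(4)[OF a0 aS pE pE] vE, of k l k] by metis
    then show ?case using step E2[of k] by simp
  qed
  have cauchy: "\<forall>e>0. \<exists>M. \<forall>k\<ge>M. \<forall>l\<ge>M. nrm a (psum x k - psum x l) < e"
  proof (intro allI impI)
    fix e :: real assume e: "e > 0"
    have "Cauchy (\<lambda>n. sum T {..<n})" using summable_LIMSEQ[OF smT] by (rule LIMSEQ_imp_Cauchy)
    then obtain M where M: "\<And>m n. m \<ge> M \<Longrightarrow> n \<ge> M \<Longrightarrow> dist (sum T {..<m}) (sum T {..<n}) < e"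
      using e unfolding Cauchy_def by blast
    show "\<exists>M. \<forall>k\<ge>M. \<forall>l\<ge>M. nrm a (psum x k - psum x l) < e"
    proof (intro exI allI impI)
      fix k l assume kl: "k \<ge> M" "l \<ge> M"
      show "nrm a (psum x k - psum x l) < e"
      proof (cases "l \<le> k")
        case True
        then show ?thesis using dbound[OF True] M[OF kl] by (simp add: dist_real_def)
      next
        case False
        then have "nrm a (psum x l - psum x k) \<le> sum T {..<l} - sum T {..<k}" using dbound by simp
        moreover have "nrm a (psum x k - psum x l) = nrm a (psum x l - psum x k)"
          using lv(9)[OF a0 aS pE pE] .
        ultimately show ?thesis using M[OF kl] by (simp add: dist_real_def)
      qed
    qed
  qed
  have "\<exists>y\<in>E a. (\<lambda>k. nrm a (psum x k - y)) \<longlonglongrightarrow> 0"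
    using bo[OF a0 aS] pE cauchy unfolding banach_on_def by blast
  then obtain y where y: "y \<in> E a" "(\<lambda>k. nrm a (psum x k - y)) \<longlonglongrightarrow> 0" by blast
  have cv: "conv x y a" unfolding conv_def using a0 aS y pE by blast
  have Fy: "F x = y" using F_eq[OF cv] .
  have Fb0: "nrm a y \<le> suminf T + 0"
  proof (rule LIMSEQ_le_const)
    show "(\<lambda>n. suminf T + nrm a (psum x n - y)) \<longlonglongrightarrow> suminf T + 0" by (intro tendsto_add y tendsto_const)
    show "\<exists>N. \<forall>n\<ge>N. nrm a y \<le> suminf T + nrm a (psum x n - y)"
    proof (intro exI allI impI)
      fix n :: nat
      have "y = psum x n + (y - psum x n)" by simp
      then have "nrm a y \<le> nrm a (psum x n) + nrm a (y - psum x n)"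
        using lv(7)[OF a0 aS pE lv(4)[OF a0 aS y(1) pE]] by metis
      also have "nrm a (y - psum x n) = nrm a (psum x n - y)" using lv(9)[OF a0 aS y(1) pE] .
      also have "nrm a (psum x n) \<le> suminf T"
        using pbound[of n] sum_le_suminf[OF smT, of "{..<n}"] T0 by (meson finite_lessThan order_trans)
      finally show "nrm a y \<le> suminf T + nrm a (psum x n - y)" by simp
    qed
  qed
  then have Fb: "nrm a y \<le> suminf T" by simp
  have sumval: "suminf T = 1 / (1 - q) * c" using sums_unique[OF sumT] by simp
  show ?thesis
    using E1 y Fy Fb smT sumval cv
    unfolding a_def[symmetric] N_def[symmetric] c_def[symmetric] T_def[symmetric] q_def[symmetric]
    by (simp add: psum_def)
qed

end
context sc begin

lemma u_ss: "x \<in> scaled_space S E \<Longrightarrow> u x \<in> scaled_space S E"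
  using taumor unfolding tau_morphism_def linear_on_space_def by blast

lemma uj_ss: "x \<in> scaled_space S E \<Longrightarrow> (u ^^ j) x \<in> scaled_space S E"
  by (induction j) (auto intro: u_ss)

lemma uj_add: "x \<in> scaled_space S E \<Longrightarrow> y \<in> scaled_space S E \<Longrightarrow> (u ^^ j) (x + y) = (u ^^ j) x + (u ^^ j) y"
proof (induction j)
  case 0 then show ?case by simp
next
  case (Suc j)
  have "u ((u ^^ j) x + (u ^^ j) y) = u ((u ^^ j) x) + u ((u ^^ j) y)"
    using taumor uj_ss[OF Suc.prems(1)] uj_ss[OF Suc.prems(2)] unfolding tau_morphism_def linear_on_space_def by blast
  then show ?case using Suc by simp
qed

lemma uj_scale: "x \<in> scaled_space S E \<Longrightarrow> (u ^^ j) (c *\<^sub>R x) = c *\<^sub>R (u ^^ j) x"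
proof (induction j)
  case 0 then show ?case by simp
next
  case (Suc j)
  have "u (c *\<^sub>R (u ^^ j) x) = c *\<^sub>R u ((u ^^ j) x)"
    using taumor uj_ss[OF Suc.prems(1)] unfolding tau_morphism_def linear_on_space_def by blast
  then show ?case using Suc by simp
qed

lemma psum_add: "x \<in> scaled_space S E \<Longrightarrow> y \<in> scaled_space S E \<Longrightarrow> psum (x + y) n = psum x n + psum y n"
  unfolding psum_def by (simp add: uj_add scaleR_add_right sum.distrib)

lemma psum_scale: "x \<in> scaled_space S E \<Longrightarrow> psum (c *\<^sub>R x) n = c *\<^sub>R psum x n"
  unfolding psum_def by (simp add: uj_scale scaleR_sum_right mult.commute)

lemma ss_E: "x \<in> scaled_space S E \<Longrightarrow> \<exists>s0. 0 < s0 \<and> s0 < S \<and> x \<in> E s0"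
  unfolding scaled_space_def by auto

lemma E_ss: "0 < a \<Longrightarrow> a < S \<Longrightarrow> x \<in> E a \<Longrightarrow> x \<in> scaled_space S E"
  unfolding scaled_space_def by auto

lemma down: "0 < t \<Longrightarrow> t \<le> s0 \<Longrightarrow> s0 < S \<Longrightarrow> x \<in> E s0 \<Longrightarrow> x \<in> E t"
  using sub(1) by blast

context
  assumes small: "\<And>s. 0 < s \<Longrightarrow> s \<le> \<tau> \<Longrightarrow> 3 * N1 E nrm s u < s"
begin

lemma lam0:
  assumes "0 < t" "t \<le> \<tau>"
  shows "0 < (1 - 3 * N1 E nrm t u / t) / 2" "(1 - 3 * N1 E nrm t u / t) / 2 < 1 - 3 * N1 E nrm t u / t"
proof -
  have "3 * N1 E nrm t u / t < 1" using small[OF assms] assms by simp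
  then show "0 < (1 - 3 * N1 E nrm t u / t) / 2" "(1 - 3 * N1 E nrm t u / t) / 2 < 1 - 3 * N1 E nrm t u / t"
    by simp_all
qed

lemma conv_at:
  assumes "0 < t" "t \<le> \<tau>" "x \<in> E t"
  shows "conv x (F x) ((1 - 3 * N1 E nrm t u / t) / 2 * t)"
  using main[OF assms(1,2) lam0[OF assms(1,2)] assms(3)] by blast

lemma F_add:
  assumes x: "x \<in> scaled_space S E" and y: "y \<in> scaled_space S E"
  shows "F (x + y) = F x + F y"
proof -
  obtain s1 where s1: "0 < s1" "s1 < S" "x \<in> E s1" using ss_E[OF x] by blast
  obtain s2 where s2: "0 < s2" "s2 < S" "y \<in> E s2" using ss_E[OF y] by blast
  define t where "t = min (min s1 s2) \<tau>"
  have t: "0 < t" "t \<le> \<tau>" unfolding t_def using s1 s2 tau by auto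
  have xt: "x \<in> E t" using down[OF t(1) _ s1(2) s1(3)] unfolding t_def by simp
  have yt: "y \<in> E t" using down[OF t(1) _ s2(2) s2(3)] unfolding t_def by simp
  define a where "a = (1 - 3 * N1 E nrm t u / t) / 2 * t"
  have cx: "conv x (F x) a" and cy: "conv y (F y) a" unfolding a_def using conv_at[OF t] xt yt by auto
  have a: "0 < a" "a < S" using cx unfolding conv_def by auto
  have Fx: "F x \<in> E a" and px: "\<And>n. psum x n \<in> E a" and lx: "(\<lambda>n. nrm a (psum x n - F x)) \<longlonglongrightarrow> 0"
    using cx unfolding conv_def by auto
  have Fy: "F y \<in> E a" and py: "\<And>n. psum y n \<in> E a" and ly: "(\<lambda>n. nrm a (psum y n - F y)) \<longlonglongrightarrow> 0"
    using cy unfolding conv_def by auto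
  have eq: "psum (x + y) n - (F x + F y) = (psum x n - F x) + (psum y n - F y)" for n
    using psum_add[OF x y] by simp
  have "conv (x + y) (F x + F y) a"
    unfolding conv_def
  proof (intro conjI allI)
    show "0 < a" "a < S" by (fact a)+
    show "F x + F y \<in> E a" using lv(2)[OF a Fx Fy] .
    fix n show "psum (x + y) n \<in> E a" using psum_add[OF x y] lv(2)[OF a px py] by simp
  next
    show "(\<lambda>n. nrm a (psum (x + y) n - (F x + F y))) \<longlonglongrightarrow> 0"
    proof (rule tendsto_sandwich[of "\<lambda>n. 0" _ _ "\<lambda>n. nrm a (psum x n - F x) + nrm a (psum y n - F y)"])
      show "\<forall>\<^sub>F n in sequentially. 0 \<le> nrm a (psum (x + y) n - (F x + F y))"
        unfolding eq using lv(5)[OF a] lv(2)[OF a] lv(4)[OF a] px py Fx Fy by (auto intro: always_eventually)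
      show "\<forall>\<^sub>F n in sequentially. nrm a (psum (x + y) n - (F x + F y)) \<le> nrm a (psum x n - F x) + nrm a (psum y n - F y)"
        unfolding eq using lv(7)[OF a] lv(4)[OF a] px py Fx Fy by (auto intro: always_eventually)
      show "(\<lambda>n. nrm a (psum x n - F x) + nrm a (psum y n - F y)) \<longlonglongrightarrow> 0"
        using tendsto_add[OF lx ly] by simp
    qed simp
  qed
  then show ?thesis by (rule F_eq)
qed

lemma F_scale:
  assumes x: "x \<in> scaled_space S E"
  shows "F (c *\<^sub>R x) = c *\<^sub>R F x"
proof -
  obtain s1 where s1: "0 < s1" "s1 < S" "x \<in> E s1" using ss_E[OF x] by blast
  define t where "t = min s1 \<tau>"
  have t: "0 < t" "t \<le> \<tau>" unfolding t_def using s1 tau by auto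
  have xt: "x \<in> E t" using down[OF t(1) _ s1(2) s1(3)] unfolding t_def by simp
  define a where "a = (1 - 3 * N1 E nrm t u / t) / 2 * t"
  have cx: "conv x (F x) a" unfolding a_def using conv_at[OF t] xt by auto
  have a: "0 < a" "a < S" using cx unfolding conv_def by auto
  have Fx: "F x \<in> E a" and px: "\<And>n. psum x n \<in> E a" and lx: "(\<lambda>n. nrm a (psum x n - F x)) \<longlonglongrightarrow> 0"
    using cx unfolding conv_def by auto
  have eq: "psum (c *\<^sub>R x) n - c *\<^sub>R F x = c *\<^sub>R (psum x n - F x)" for n
    using psum_scale[OF x] by (simp add: scaleR_diff_right)
  have "conv (c *\<^sub>R x) (c *\<^sub>R F x) a"
    unfolding conv_def
  proof (intro conjI allI)
    show "0 < a" "a < S" by (fact a)+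
    show "c *\<^sub>R F x \<in> E a" using lv(3)[OF a Fx] .
    fix n show "psum (c *\<^sub>R x) n \<in> E a" using psum_scale[OF x] lv(3)[OF a px] by simp
  next
    have "(\<lambda>n. nrm a (psum (c *\<^sub>R x) n - c *\<^sub>R F x)) = (\<lambda>n. \<bar>c\<bar> * nrm a (psum x n - F x))"
      unfolding eq using lv(8)[OF a] lv(4)[OF a px Fx] by auto
    moreover have "(\<lambda>n. \<bar>c\<bar> * nrm a (psum x n - F x)) \<longlonglongrightarrow> \<bar>c\<bar> * 0"
      by (intro tendsto_mult tendsto_const lx)
    ultimately show "(\<lambda>n. nrm a (psum (c *\<^sub>R x) n - c *\<^sub>R F x)) \<longlonglongrightarrow> 0" by simp
  qed
  then show ?thesis by (rule F_eq)
qed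

lemma F_cont:
  assumes s0: "0 < s0" "s0 < S"
  shows "\<exists>s'. 0 < s' \<and> s' < S \<and> maps_cont E nrm F s0 s'"
proof -
  define t where "t = min s0 \<tau>"
  have t: "0 < t" "t \<le> \<tau>" "t \<le> s0" unfolding t_def using s0 tau by auto
  define N where "N = N1 E nrm t u"
  define lam where "lam = (1 - 3 * N1 E nrm t u / t) / 2"
  have lm: "0 < lam" "lam < 1 - 3 * N1 E nrm t u / t" unfolding lam_def using lam0[OF t(1,2)] by auto
  have N0: "0 \<le> N" unfolding N_def using N1_adm(1)[OF t(1,2)] .
  have l1: "lam < 1" using lm N0 t unfolding N_def[symmetric] by (smt (verit) divide_nonneg_pos)
  have gap: "3 * N < (1 - lam) * t" using lm t unfolding N_def[symmetric] by (simp add: field_simps)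
  define K where "K = 1 / (1 - 3 * N / ((1 - lam) * t))"
  have "3 * N / ((1 - lam) * t) < 1" using gap l1 t by simp
  then have K0: "0 \<le> K" unfolding K_def by simp
  have ltS: "lam * t < S" using l1 t s0 by (smt (verit, best) mult_less_cancel_right2)
  have lt0: "0 < lam * t" using lm t by simp
  have "maps_cont E nrm F s0 (lam * t)"
    unfolding maps_cont_def
  proof (intro conjI ballI exI)
    fix x assume x: "x \<in> E s0"
    have xt: "x \<in> E t" using down[OF t(1) t(3) s0(2) x] .
    note M = main[OF t(1,2) lm xt]
    show "F x \<in> E (lam * t)" using M by blast
    have "nrm (lam * t) (F x) \<le> K * nrm t x" using M unfolding K_def N_def by simp
    also have "\<dots> \<le> K * nrm s0 x" using sub(2)[OF t(1) t(3) s0(2) x] K0 by (intro mult_left_mono)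
    finally show "nrm (lam * t) (F x) \<le> K * nrm s0 x" .
  qed
  then show ?thesis using ltS lt0 by blast
qed

lemma final:
  "\<exists>f. morphism S E nrm f \<and>
     (\<forall>s lam x. 0 < s \<and> s \<le> \<tau> \<and> 0 < lam \<and> lam < 1 - 3 * N1 E nrm s u / s \<and> x \<in> E s \<longrightarrow>
        (\<forall>j. (u ^^ j) x \<in> E (lam * s)) \<and> f x \<in> E (lam * s) \<and>
        (\<lambda>n. nrm (lam * s) ((\<Sum>j<n. (u ^^ j) x /\<^sub>R fact j) - f x)) \<longlonglongrightarrow> 0 \<and>
        summable (\<lambda>j. (3 * N1 E nrm s u) ^ j / ((1 - lam) ^ j * s ^ j) * nrm s x) \<and>
        nrm (lam * s) (f x) \<le> (\<Sum>j. (3 * N1 E nrm s u) ^ j / ((1 - lam) ^ j * s ^ j) * nrm s x) \<and>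
        (\<Sum>j. (3 * N1 E nrm s u) ^ j / ((1 - lam) ^ j * s ^ j) * nrm s x)
          = 1 / (1 - 3 * N1 E nrm s u / ((1 - lam) * s)) * nrm s x)"
proof (rule exI[of _ F], rule conjI)
  show "morphism S E nrm F"
    unfolding morphism_def linear_on_space_def
  proof (intro conjI allI impI ballI)
    show "F ` scaled_space S E \<subseteq> scaled_space S E"
    proof
      fix z assume "z \<in> F ` scaled_space S E"
      then obtain x where x: "x \<in> scaled_space S E" and z: "z = F x" by blast
      obtain s1 where s1: "0 < s1" "s1 < S" "x \<in> E s1" using ss_E[OF x] by blast
      define t where "t = min s1 \<tau>"
      have t: "0 < t" "t \<le> \<tau>" unfolding t_def using s1 tau by auto
      have xt: "x \<in> E t" using down[OF t(1) _ s1(2) s1(3)] unfolding t_def by simp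
      have "conv x (F x) ((1 - 3 * N1 E nrm t u / t) / 2 * t)" using conv_at[OF t xt] .
      then show "z \<in> scaled_space S E" unfolding z conv_def using E_ss by blast
    qed
  qed (auto intro: F_add F_scale F_cont)
next
  show "\<forall>s lam x. 0 < s \<and> s \<le> \<tau> \<and> 0 < lam \<and> lam < 1 - 3 * N1 E nrm s u / s \<and> x \<in> E s \<longrightarrow>
        (\<forall>j. (u ^^ j) x \<in> E (lam * s)) \<and> F x \<in> E (lam * s) \<and>
        (\<lambda>n. nrm (lam * s) ((\<Sum>j<n. (u ^^ j) x /\<^sub>R fact j) - F x)) \<longlonglongrightarrow> 0 \<and>
        summable (\<lambda>j. (3 * N1 E nrm s u) ^ j / ((1 - lam) ^ j * s ^ j) * nrm s x) \<and>
        nrm (lam * s) (F x) \<le> (\<Sum>j. (3 * N1 E nrm s u) ^ j / ((1 - lam) ^ j * s ^ j) * nrm s x) \<and>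
        (\<Sum>j. (3 * N1 E nrm s u) ^ j / ((1 - lam) ^ j * s ^ j) * nrm s x)
          = 1 / (1 - 3 * N1 E nrm s u / ((1 - lam) * s)) * nrm s x"
  proof (intro allI impI)
    fix s lam x
    assume h: "0 < s \<and> s \<le> \<tau> \<and> 0 < lam \<and> lam < 1 - 3 * N1 E nrm s u / s \<and> x \<in> E s"
    then show "(\<forall>j. (u ^^ j) x \<in> E (lam * s)) \<and> F x \<in> E (lam * s) \<and>
        (\<lambda>n. nrm (lam * s) ((\<Sum>j<n. (u ^^ j) x /\<^sub>R fact j) - F x)) \<longlonglongrightarrow> 0 \<and>
        summable (\<lambda>j. (3 * N1 E nrm s u) ^ j / ((1 - lam) ^ j * s ^ j) * nrm s x) \<and>
        nrm (lam * s) (F x) \<le> (\<Sum>j. (3 * N1 E nrm s u) ^ j / ((1 - lam) ^ j * s ^ j) * nrm s x) \<and>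
        (\<Sum>j. (3 * N1 E nrm s u) ^ j / ((1 - lam) ^ j * s ^ j) * nrm s x)
          = 1 / (1 - 3 * N1 E nrm s u / ((1 - lam) * s)) * nrm s x"
      using main[of s lam x] by blast
  qed
qed

end

end
theorem mainTheorem5:
  fixes S \<tau> :: real and E :: "real \<Rightarrow> 'a::real_vector set" and nrm :: "real \<Rightarrow> 'a \<Rightarrow> real"
    and u :: "'a \<Rightarrow> 'a"
  assumes scale: "S_scale S E nrm"
    and tau: "0 < \<tau>" "\<tau> < S"
    and taumor: "tau_morphism S E nrm \<tau> u"
    and bdd: "one_bounded E nrm \<tau> u"
    and small: "\<And>s. 0 < s \<Longrightarrow> s \<le> \<tau> \<Longrightarrow> 3 * N1 E nrm s u < s"
  shows "\<exists>f. morphism S E nrm f \<and>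
     (\<forall>s lam x. 0 < s \<and> s \<le> \<tau> \<and> 0 < lam \<and> lam < 1 - 3 * N1 E nrm s u / s \<and> x \<in> E s \<longrightarrow>
        (\<forall>j. (u ^^ j) x \<in> E (lam * s)) \<and> f x \<in> E (lam * s) \<and>
        (\<lambda>n. nrm (lam * s) ((\<Sum>j<n. (u ^^ j) x /\<^sub>R fact j) - f x)) \<longlonglongrightarrow> 0 \<and>
        summable (\<lambda>j. (3 * N1 E nrm s u) ^ j / ((1 - lam) ^ j * s ^ j) * nrm s x) \<and>
        nrm (lam * s) (f x) \<le> (\<Sum>j. (3 * N1 E nrm s u) ^ j / ((1 - lam) ^ j * s ^ j) * nrm s x) \<and>
        (\<Sum>j. (3 * N1 E nrm s u) ^ j / ((1 - lam) ^ j * s ^ j) * nrm s x)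
          = 1 / (1 - 3 * N1 E nrm s u / ((1 - lam) * s)) * nrm s x)"
proof -
  interpret sc S \<tau> E nrm u using assms by unfold_locales
  show ?thesis by (rule final) (rule small)
qed

end
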